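(* Let $q$ be a prime power, and let $g(x)\in\mathbb{F}_q[x]$ be a monic divisor of $x^{2n}-1$ with $g(x)\neq x^{2n}-1$ and $k=\deg g$. Let $\mathscr{D}=\langle g(x)\rangle$ be the $q$-ary linear cyclic code of length $2n$ generated by $g$. Let $h(x)=(x^{2n}-1)/g(x)=h_0+h_1x+\cdots+h_{2n-k}x^{2n-k}$, $h^*(x)=\frac{1}{h_{2n-k}}x^{2n-k}h(1/x)$, and let $V_{h^*(x)}\in\mathbb{F}_q^{2n}$ be the coefficient vector of $h^*(x)$ (padded with zeros). Then the $k$ vectors $\tau(V_{h^*(x)}),\tau(\sigma(V_{h^*(x)})),\ldots,\tau(\sigma^{k-1}(V_{h^*(x)}))$ are the rows of a generator matrix of the symplectic dual code $\mathscr{D}^{\perp_s}$.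
   Context: $\sigma(v_0,\ldots,v_{2n-1})=(v_{2n-1},v_0,\ldots,v_{2n-2})$ is the cyclic shift and $\tau(v_0,\ldots,v_{2n-1})=(-v_n,\ldots,-v_{2n-1},v_0,\ldots,v_{n-1})$. The symplectic inner product on $\mathbb{F}_q^{2n}$ is $\langle u,v\rangle_s=\sum_{i=0}^{n-1}(u_iv_{n+i}-u_{n+i}v_i)$ and $\mathscr{D}^{\perp_s}=\{v:\langle u,v\rangle_s=0\ \forall u\in\mathscr{D}\}$. Vectors of $\mathbb{F}_q^{2n}$ are identified with polynomials of degree $<2n$ modulo $x^{2n}-1$. *)

theory Defs
  imports "HOL-Computational_Algebra.Polynomial"
begin

text \<open>Vectors of F_q^(2n) are functions nat => 'a vanishing at indices >= 2n.\<close>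

definition vecs :: "nat \<Rightarrow> (nat \<Rightarrow> 'a::zero) set" where
  "vecs n = {v. \<forall>i. 2*n \<le> i \<longrightarrow> v i = 0}"

definition vec_of_poly :: "nat \<Rightarrow> 'a::zero poly \<Rightarrow> (nat \<Rightarrow> 'a)" where
  "vec_of_poly n p = (\<lambda>i. if i < 2*n then coeff p i else 0)"

definition sigma :: "nat \<Rightarrow> (nat \<Rightarrow> 'a::zero) \<Rightarrow> (nat \<Rightarrow> 'a)" where
  "sigma n v = (\<lambda>i. if i < 2*n then v ((i + 2*n - 1) mod (2*n)) else 0)"

definition tau :: "nat \<Rightarrow> (nat \<Rightarrow> 'a::ab_group_add) \<Rightarrow> (nat \<Rightarrow> 'a)" where
  "tau n v = (\<lambda>i. if i < n then - v (n + i) else if i < 2*n then v (i - n) else 0)"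

definition symp :: "nat \<Rightarrow> (nat \<Rightarrow> 'a::comm_ring_1) \<Rightarrow> (nat \<Rightarrow> 'a) \<Rightarrow> 'a" where
  "symp n u v = (\<Sum>i<n. u i * v (n + i) - u (n + i) * v i)"

definition symp_dual :: "nat \<Rightarrow> (nat \<Rightarrow> 'a::comm_ring_1) set \<Rightarrow> (nat \<Rightarrow> 'a) set" where
  "symp_dual n D = {v \<in> vecs n. \<forall>u\<in>D. symp n u v = 0}"

text \<open>The cyclic code of length 2n generated by g: the ideal <g> in F_q[x]/(x^(2n)-1),
  with codewords identified with their coefficient vectors.\<close>
definition cyclic_code :: "nat \<Rightarrow> 'a::field poly \<Rightarrow> (nat \<Rightarrow> 'a) set" where
  "cyclic_code n g = {vec_of_poly n ((a * g) mod (monom 1 (2*n) - 1)) | a. True}"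

definition is_generator_matrix :: "nat \<Rightarrow> (nat \<Rightarrow> nat \<Rightarrow> 'a::field) \<Rightarrow> (nat \<Rightarrow> 'a) set \<Rightarrow> bool" where
  "is_generator_matrix k r C \<longleftrightarrow>
     (\<forall>c. (\<lambda>i. \<Sum>j<k. c j * r j i) = (\<lambda>i. 0) \<longrightarrow> (\<forall>j<k. c j = 0)) \<and>
     C = {(\<lambda>i. \<Sum>j<k. c j * r j i) | c. True}"

end

theory Submission
  imports Defs
begin

definition revp :: "nat \<Rightarrow> 'a::comm_ring_1 poly \<Rightarrow> 'a poly" where
  "revp m p = (\<Sum>i<m. monom (coeff p i) (m - 1 - i))"

lemma coeff_revp: "coeff (revp m p) j = (if j < m then coeff p (m - 1 - j) else 0)"
proof -
  have "coeff (revp m p) j = (\<Sum>i<m. if m - 1 - i = j then coeff p i else 0)"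
    unfolding revp_def coeff_sum by (simp add: coeff_monom)
  also have "\<dots> = (\<Sum>i<m. if i = m - 1 - j \<and> j < m then coeff p i else 0)"
    by (rule sum.cong) auto
  also have "\<dots> = (if j < m then coeff p (m - 1 - j) else 0)"
    by (cases "j < m") (auto simp: sum.delta)
  finally show ?thesis .
qed

lemma revp_add: "revp m (p + q) = revp m p + revp m q"
  by (simp add: poly_eq_iff coeff_revp)
lemma revp_smult: "revp m (smult a p) = smult a (revp m p)"
  by (simp add: poly_eq_iff coeff_revp)
lemma revp_sum: "revp m (\<Sum>j\<in>A. f j) = (\<Sum>j\<in>A. revp m (f j))"
  by (simp add: poly_eq_iff coeff_revp coeff_sum)

lemma revp_revp: assumes "\<forall>i\<ge>m. coeff p i = 0" shows "revp m (revp m p) = p"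
  using assms by (auto simp: poly_eq_iff coeff_revp)

lemma revp_vanish: "\<forall>i\<ge>m. coeff (revp m p) i = 0"
  by (simp add: coeff_revp)

lemma coeff_mult_vanish:
  assumes "\<forall>i\<ge>a. coeff p i = 0" "\<forall>i\<ge>b. coeff q i = 0" "a + b \<le> i + 1"
  shows "coeff (p * q) i = 0"
  unfolding coeff_mult
proof (rule sum.neutral, rule ballI)
  fix j assume "j \<in> {..i}"
  show "coeff p j * coeff q (i - j) = 0"
  proof (cases "j \<ge> a")
    case True then show ?thesis using assms by simp
  next
    case False then have "i - j \<ge> b" using assms(3) by linarith
    then show ?thesis using assms by simp
  qed
qed

lemma poly_as_monoms:
  assumes "\<forall>i\<ge>k. coeff C i = 0"
  shows "C = (\<Sum>j<k. monom (coeff C j) j)"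
  using assms by (auto simp: poly_eq_iff coeff_sum coeff_monom sum.delta')

lemma revp_monom_reflect:
  fixes h :: "'a::comm_ring_1 poly"
  assumes "degree h = N - k" "k \<le> N" "j < k"
  shows "revp N (monom 1 j * reflect_poly h) = monom 1 (k - 1 - j) * h"
proof (rule poly_eqI)
  fix m
  have hz: "\<And>i. i > N - k \<Longrightarrow> coeff h i = 0" using assms(1) coeff_eq_0 by metis
  have L: "coeff (revp N (monom 1 j * reflect_poly h)) m =
     (if m < N \<and> j \<le> N - 1 - m \<and> N - 1 - m - j \<le> N - k then coeff h (N - k - (N - 1 - m - j)) else 0)"
    by (simp add: coeff_revp coeff_monom_mult coeff_reflect_poly assms(1) not_less)
  have R: "coeff (monom 1 (k - 1 - j) * h) m = (if k - 1 - j \<le> m then coeff h (m - (k - 1 - j)) else 0)"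
    by (simp add: coeff_monom_mult not_less)
  show "coeff (revp N (monom 1 j * reflect_poly h)) m = coeff (monom 1 (k - 1 - j) * h) m"
  proof (cases "m < N \<and> j \<le> N - 1 - m")
    case True
    then have e1: "(N - 1 - m - j \<le> N - k) = (k - 1 - j \<le> m)" using assms by linarith
    have e2: "N - k - (N - 1 - m - j) = m - (k - 1 - j)" if "k - 1 - j \<le> m" using assms True that by linarith
    show ?thesis unfolding L R using True e1 e2 by auto
  next
    case False
    have "m - (k - 1 - j) > N - k" if "k - 1 - j \<le> m" using False assms that by linarith
    then show ?thesis unfolding L R using False hz by auto
  qed
qed

lemma monom_mult_smult: "monom c j * (p::'a::comm_ring_1 poly) = smult c (monom 1 j * p)"
  by (simp add: poly_eq_iff coeff_monom_mult)

lemma revp_mult_reflect: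
  fixes h :: "'a::comm_ring_1 poly"
  assumes "degree h = N - k" "k \<le> N" "\<forall>i\<ge>k. coeff C i = 0"
  shows "revp N (C * reflect_poly h) = revp k C * h"
proof -
  have "C * reflect_poly h = (\<Sum>j<k. monom (coeff C j) j) * reflect_poly h"
    using poly_as_monoms[OF assms(3)] by (rule arg_cong)
  also have "\<dots> = (\<Sum>j<k. smult (coeff C j) (monom 1 j * reflect_poly h))"
    unfolding sum_distrib_right by (rule sum.cong) (rule refl, rule monom_mult_smult)
  finally have "revp N (C * reflect_poly h) = (\<Sum>j<k. smult (coeff C j) (revp N (monom 1 j * reflect_poly h)))"
    by (simp only: revp_sum revp_smult)
  also have "\<dots> = (\<Sum>j<k. smult (coeff C j) (monom 1 (k - 1 - j) * h))"
    by (rule sum.cong) (use assms in \<open>auto simp: revp_monom_reflect\<close>)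
  also have "\<dots> = revp k C * h"
    unfolding revp_def sum_distrib_right by (rule sum.cong) (rule refl, rule monom_mult_smult[symmetric])
  finally show ?thesis .
qed

lemma sum_lessThan_add: "(\<Sum>i<m+(n::nat). f i) = (\<Sum>i<m. f i) + (\<Sum>i<n. f (m+i))"
  by (induction n) (simp_all add: add.assoc)

lemma dot_coeff:
  assumes "0 < N"
  shows "(\<Sum>i<N. coeff P i * coeff Q i) = coeff (P * revp N Q) (N - 1)"
proof -
  have "coeff (P * revp N Q) (N - 1) = (\<Sum>i\<le>N - 1. coeff P i * coeff Q i)"
    unfolding coeff_mult by (rule sum.cong) (use assms in \<open>auto simp: coeff_revp\<close>)
  also have "{..N - 1} = {..<N}" using assms by auto
  finally show ?thesis by simp
qed

lemma vec_in_vecs: "vec_of_poly n p \<in> vecs n"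
  by (simp add: vecs_def vec_of_poly_def)

lemma tau_vecs: "tau n w \<in> vecs n"
  by (simp add: vecs_def tau_def)

lemma tau_surj:
  assumes "v \<in> vecs n"
  shows "\<exists>w\<in>vecs n. v = tau n w"
proof
  let ?w = "\<lambda>i. if i < n then v (n + i) else if i < 2*n then - v (i - n) else 0"
  show "?w \<in> vecs n" by (simp add: vecs_def)
  show "v = tau n ?w"
  proof
    fix i show "v i = tau n ?w i"
      using assms by (auto simp: tau_def vecs_def)
  qed
qed

lemma tau_inj0:
  assumes "w \<in> vecs n" "tau n w = (\<lambda>i. 0)"
  shows "w = (\<lambda>i. 0)"
proof
  fix i
  show "w i = 0"
  proof (cases "i < n")
    case True
    have "tau n w (n + i) = 0" using assms(2) by simp
    then show ?thesis using True by (simp add: tau_def)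
  next
    case False
    show ?thesis
    proof (cases "i < 2*n")
      case True
      have "tau n w (i - n) = 0" using assms(2) by simp
      moreover have "i - n < n" "n + (i - n) = i" using True False by linarith+
      ultimately show ?thesis by (simp add: tau_def)
    next
      case False then show ?thesis using assms(1) by (simp add: vecs_def)
    qed
  qed
qed

lemma symp_tau: "symp n u (tau n w) = (\<Sum>i<2*n. u i * w i)"
proof -
  have "symp n u (tau n w) = (\<Sum>i<n. u i * w i + u (n + i) * w (n + i))"
    unfolding symp_def by (rule sum.cong) (auto simp: tau_def)
  also have "\<dots> = (\<Sum>i<n + n. u i * w i)"
    by (simp add: sum_lessThan_add sum.distrib)
  finally show ?thesis by (simp add: mult_2)
qed

lemma tau_lin: "(\<lambda>i. \<Sum>j<k. (c j :: 'a::comm_ring_1) * tau n (r j) i) = tau n (\<lambda>i. \<Sum>j<k. c j * r j i)"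
  by (auto simp: tau_def sum_negf[symmetric] fun_eq_iff)

lemma vec_lin:
  fixes hs :: "'a::comm_ring_1 poly"
  shows "(\<lambda>i. \<Sum>j<k. c j * vec_of_poly n (monom 1 j * hs) i) = vec_of_poly n ((\<Sum>j<k. monom (c j) j) * hs)"
  by (auto simp: vec_of_poly_def fun_eq_iff sum_distrib_right coeff_sum monom_mult_smult[of "c _"])

lemma sigma_step:
  fixes p :: "'a::comm_ring_1 poly"
  assumes "coeff (monom 1 j * p) (2*n - 1) = 0" "n > 0"
  shows "sigma n (vec_of_poly n (monom 1 j * p)) = vec_of_poly n (monom 1 (Suc j) * p)"
proof
  fix i
  show "sigma n (vec_of_poly n (monom 1 j * p)) i = vec_of_poly n (monom 1 (Suc j) * p) i"
  proof (cases "i < 2*n")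
    case True
    then have S: "sigma n (vec_of_poly n (monom 1 j * p)) i = vec_of_poly n (monom 1 j * p) ((i + 2*n - 1) mod (2*n))"
      unfolding sigma_def by simp
    have V: "vec_of_poly n (monom 1 (Suc j) * p) i = coeff (monom 1 (Suc j) * p) i"
      using True unfolding vec_of_poly_def by simp
    show ?thesis
    proof (cases "i = 0")
      case True
      have "(i + 2 * n - 1) mod (2 * n) = 2*n - 1" using assms True by simp
      moreover have "2*n - 1 < 2*n" using assms by simp
      ultimately show ?thesis unfolding S V using True assms(1)
        by (simp add: vec_of_poly_def coeff_monom_mult)
    next
      case False
      have "(i + 2 * n - 1) mod (2 * n) = i - 1"
      proof -
        have e: "i + 2 * n - 1 = (i - 1) + 2*n" using False by simp
        have "((i - 1) + 2*n) mod (2*n) = i - 1" using \<open>i < 2*n\<close> by simp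
        then show ?thesis by (simp only: e)
      qed
      moreover have "i - 1 < 2*n" using True by simp
      ultimately have S2: "sigma n (vec_of_poly n (monom 1 j * p)) i = coeff (monom 1 j * p) (i - 1)"
        unfolding S by (simp add: vec_of_poly_def)
      have "coeff (monom 1 j * p) (i - 1) = coeff (monom 1 (Suc j) * p) i"
        unfolding coeff_monom_mult using False by (cases "i < Suc j") auto
      then show ?thesis unfolding S2 V .
    qed
  next
    case False then show ?thesis by (simp add: sigma_def vec_of_poly_def)
  qed
qed

lemma sigma_pow:
  fixes hs :: "'a::comm_ring_1 poly"
  assumes "\<forall>i\<ge>2*n - k + 1. coeff hs i = 0" "k \<le> 2*n" "n > 0" "j < k"
  shows "(sigma n ^^ j) (vec_of_poly n hs) = vec_of_poly n (monom 1 j * hs)"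
  using assms(4)
proof (induction j)
  case 0 then show ?case by simp
next
  case (Suc j)
  have "coeff (monom 1 j * hs) (2*n - 1) = 0"
    using assms Suc.prems by (auto simp: coeff_monom_mult)
  then show ?case using Suc sigma_step[of j hs n] assms by simp
qed


theorem lemma4p4:
  fixes g :: "'a::{finite,field} poly" and n :: nat
  assumes "n > 0"
    and "lead_coeff g = 1"
    and "g dvd (monom 1 (2*n) - 1)"
    and "g \<noteq> monom 1 (2*n) - 1"
  defines "k \<equiv> degree g"
    and "h \<equiv> (monom 1 (2*n) - 1) div g"
  defines "hstar \<equiv> smult (1 / coeff h (2*n - k)) (reflect_poly h)"
  shows "is_generator_matrix k (\<lambda>j. tau n ((sigma n ^^ j) (vec_of_poly n hstar)))
           (symp_dual n (cyclic_code n g))"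
proof -
  define N where "N = 2*n"
  define f :: "'a poly" where "f = monom 1 N - 1"
  have N0: "N > 0" using assms(1) N_def by simp
  have g0: "g \<noteq> 0" using assms(2) by auto
  have coeff_f: "coeff f i = (if i = N then 1 else 0) - (if i = 0 then 1 else 0)" for i
    unfolding f_def by (simp add: coeff_monom)
  have degf: "degree f = N"
  proof (rule antisym)
    show "degree f \<le> N" by (rule degree_le) (use N0 in \<open>auto simp: coeff_f\<close>)
    show "N \<le> degree f" by (rule le_degree) (use N0 in \<open>auto simp: coeff_f\<close>)
  qed
  have f0: "f \<noteq> 0" using degf N0 by auto
  have fgh: "f = g * h" unfolding h_def f_def N_def using assms(3) by simp
  have h0: "h \<noteq> 0" using fgh f0 by auto
  have degh: "degree h = N - k" and kN: "k \<le> N"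
    using degree_mult_eq[OF g0 h0] fgh degf k_def by auto
  define c where "c = coeff h (N - k)"
  have c0: "c \<noteq> 0" unfolding c_def degh[symmetric] using h0 by simp
  have hs_def: "hstar = smult (1/c) (reflect_poly h)" unfolding hstar_def c_def N_def by simp
  have hs_van: "\<forall>i\<ge>N - k + 1. coeff hstar i = 0"
    unfolding hs_def by (auto simp: coeff_reflect_poly degh)
  have hs0: "hstar \<noteq> 0"
  proof -
    have "coeff (reflect_poly h) 0 \<noteq> 0" using h0 by (simp add: coeff_reflect_poly)
    then show ?thesis unfolding hs_def using c0 by auto
  qed
  have g_van: "\<forall>i\<ge>k+1. coeff g i = 0" unfolding k_def by (auto intro: coeff_eq_0)
  have h_van: "\<forall>i\<ge>N-k+1. coeff h i = 0" using degh by (auto intro: coeff_eq_0)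
  have revhs: "revp N (C * hstar) = smult (1/c) (revp k C * h)" if "\<forall>i\<ge>k. coeff C i = 0" for C
    unfolding hs_def mult_smult_right revp_smult using revp_mult_reflect[OF degh kN that] by simp
  define dot :: "(nat \<Rightarrow> 'a) \<Rightarrow> (nat \<Rightarrow> 'a) \<Rightarrow> 'a" where "dot u w = (\<Sum>i<N. u i * w i)" for u w
  have dot_vec: "dot (vec_of_poly n P) (vec_of_poly n Q) = coeff (P * revp N Q) (N - 1)" for P Q
  proof -
    have "dot (vec_of_poly n P) (vec_of_poly n Q) = (\<Sum>i<N. coeff P i * coeff Q i)"
      unfolding dot_def by (rule sum.cong) (auto simp: vec_of_poly_def N_def)
    then show ?thesis using dot_coeff[OF N0] by simp
  qed
  let ?D = "cyclic_code n g"
  have D_def': "?D = {vec_of_poly n ((a * g) mod f) | a. True}"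
    unfolding cyclic_code_def f_def N_def by simp

  have A: "dot u (vec_of_poly n (C * hstar)) = 0" if C: "\<forall>i\<ge>k. coeff C i = 0" and u: "u \<in> ?D" for u C
  proof -
    obtain a where ua: "u = vec_of_poly n ((a * g) mod f)" using u D_def' by blast
    define P where "P = (a * g) mod f"
    have "g dvd P" unfolding P_def fgh by (rule dvd_mod) auto
    then obtain a' where Pa: "P = g * a'" by (elim dvdE)
    have Pdeg: "P = 0 \<or> degree P < N" unfolding P_def using degree_mod_less[OF f0] degf by simp
    have a_van: "\<forall>i\<ge>N - k. coeff a' i = 0"
    proof (cases "a' = 0")
      case False
      then have "degree P = k + degree a'" unfolding Pa k_def using g0 by (simp add: degree_mult_eq)
      moreover have "P \<noteq> 0" unfolding Pa using g0 False by simp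
      ultimately have "degree a' < N - k" using Pdeg by simp
      then show ?thesis by (auto intro: coeff_eq_0)
    qed simp
    define b where "b = a' * revp k C"
    have b_van: "coeff b (N - 1) = 0" unfolding b_def
      by (rule coeff_mult_vanish[OF a_van revp_vanish]) (use kN N0 in simp)
    have "dot u (vec_of_poly n (C * hstar)) = coeff (P * smult (1/c) (revp k C * h)) (N - 1)"
      unfolding ua P_def[symmetric] dot_vec revhs[OF C] ..
    also have "P * smult (1/c) (revp k C * h) = smult (1/c) (b * (g * h))"
      unfolding Pa b_def by (simp add: ac_simps)
    also have "g * h = monom 1 N - 1" using fgh f_def by simp
    also have "b * (monom 1 N - 1) = monom 1 N * b - b" by (simp add: algebra_simps)
    also have "coeff (smult (1/c) (monom 1 N * b - b)) (N - 1) = 0"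
      using b_van N0 by (simp add: coeff_monom_mult)
    finally show ?thesis .
  qed
  have B: "\<exists>C. (\<forall>i\<ge>k. coeff C i = 0) \<and> w = vec_of_poly n (C * hstar)"
    if w: "w \<in> vecs n" and orth: "\<forall>u\<in>?D. dot u w = 0" for w
  proof -
    define W where "W = (\<Sum>i<N. monom (w i) i)"
    have coeffW: "coeff W i = w i" for i
      using w unfolding W_def vecs_def N_def by (auto simp: coeff_sum coeff_monom)
    have W_van: "\<forall>i\<ge>N. coeff W i = 0" using w unfolding coeffW vecs_def N_def by auto
    have wW: "w = vec_of_poly n W"
      using w unfolding vec_of_poly_def vecs_def by (auto simp: coeffW)
    define R where "R = revp N W"
    have Z: "coeff (g * R) m = 0" if m: "k \<le> m" "m < N" for m
    proof -
      define i where "i = N - 1 - m"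
      have i: "i < N - k" "m = N - 1 - i" using m unfolding i_def by auto
      have "degree (monom 1 i * g) = i + k"
        unfolding k_def using g0 by (simp add: degree_mult_eq degree_monom_eq)
      then have "degree (monom 1 i * g) < degree f" using i degf by simp
      then have "(monom 1 i * g) mod f = monom 1 i * g" by (rule mod_poly_less)
      then have "vec_of_poly n (monom 1 i * g) = vec_of_poly n ((monom 1 i * g) mod f)" by simp
      then have "vec_of_poly n (monom 1 i * g) \<in> ?D" unfolding D_def' by blast
      then have "dot (vec_of_poly n (monom 1 i * g)) w = 0" using orth by blast
      then have "coeff (monom 1 i * (g * R)) (N - 1) = 0"
        unfolding wW dot_vec R_def by (simp add: mult.assoc)
      moreover have "\<not> N - 1 < i" "N - 1 - i = m" using i m by auto
      ultimately show ?thesis by (simp add: coeff_monom_mult)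
    qed
    have gR_van: "\<forall>i\<ge>N + k. coeff (g * R) i = 0"
      using coeff_mult_vanish[OF g_van revp_vanish[of N W]] unfolding R_def by auto
    define L where "L = (\<Sum>m<k. monom (coeff (g * R) m) m)"
    define U where "U = (\<Sum>m<k. monom (coeff (g * R) (N + m)) m)"
    have coeffL: "coeff L m = (if m < k then coeff (g * R) m else 0)" for m
      unfolding L_def by (auto simp: coeff_sum coeff_monom)
    have coeffU: "coeff U m = (if m < k then coeff (g * R) (N + m) else 0)" for m
      unfolding U_def by (auto simp: coeff_sum coeff_monom)
    have L_van: "\<forall>i\<ge>k. coeff L i = 0" by (simp add: coeffL)
    have gR: "g * R = L + monom 1 N * U"
    proof (rule poly_eqI)
      fix m
      show "coeff (g * R) m = coeff (L + monom 1 N * U) m"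
      proof (cases "m < N")
        case True
        then show ?thesis using Z[of m] by (auto simp: coeffL coeff_monom_mult)
      next
        case False
        then have "\<not> m < k" using kN by simp
        moreover have "coeff (g * R) m = 0" if "\<not> m - N < k" using gR_van that False by auto
        ultimately show ?thesis using False by (auto simp: coeffL coeffU coeff_monom_mult)
      qed
    qed
    have "monom 1 N * R - R = f * R" unfolding f_def by (simp add: algebra_simps)
    also have "\<dots> = h * (g * R)" unfolding fgh by (simp add: ac_simps)
    also have "\<dots> = h * L + monom 1 N * (h * U)" unfolding gR by (simp add: algebra_simps)
    finally have "R + h * L = monom 1 N * (R - h * U)" by (simp add: algebra_simps)
    moreover have "R + h * L = 0"
    proof (rule poly_eqI)
      fix m
      show "coeff (R + h * L) m = coeff 0 m"
      proof (cases "m < N")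
        case True
        then show ?thesis unfolding \<open>R + h * L = monom 1 N * (R - h * U)\<close> by (simp add: coeff_monom_mult)
      next
        case False
        have "coeff (h * L) m = 0" by (rule coeff_mult_vanish[OF h_van L_van]) (use False kN in simp)
        moreover have "coeff R m = 0" using False unfolding R_def by (simp add: coeff_revp)
        ultimately show ?thesis by simp
      qed
    qed
    ultimately have RhL: "R = (- L) * h" by (simp add: algebra_simps eq_neg_iff_add_eq_0)
    define C where "C = smult c (revp k (- L))"
    have C_van: "\<forall>i\<ge>k. coeff C i = 0" unfolding C_def by (simp add: coeff_revp)
    have negL_van: "\<forall>i\<ge>k. coeff (- L) i = 0" using L_van by simp
    have "revp N (C * hstar) = smult (1/c) (revp k C * h)" by (rule revhs[OF C_van])
    also have "\<dots> = (- L) * h"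
      unfolding C_def revp_smult revp_revp[OF negL_van] using c0 by simp
    also have "\<dots> = revp N W" using RhL R_def by simp
    finally have eq: "revp N (C * hstar) = revp N W" .
    have CH_van: "\<forall>i\<ge>N. coeff (C * hstar) i = 0"
      using coeff_mult_vanish[OF C_van hs_van] kN by auto
    have "C * hstar = W"
      using arg_cong[OF eq, of "revp N"] revp_revp[OF CH_van] revp_revp[OF W_van] by simp
    then show ?thesis using C_van wW by blast
  qed

  define r where "r j = tau n ((sigma n ^^ j) (vec_of_poly n hstar))" for j
  have r_eq: "r j = tau n (vec_of_poly n (monom 1 j * hstar))" if "j < k" for j
    unfolding r_def using sigma_pow[of n k hstar j] hs_van kN N_def assms(1) that by simp
  have comb: "(\<lambda>i. \<Sum>j<k. cc j * r j i) = tau n (vec_of_poly n ((\<Sum>j<k. monom (cc j) j) * hstar))" for cc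
  proof -
    have "(\<lambda>i. \<Sum>j<k. cc j * r j i) = (\<lambda>i. \<Sum>j<k. cc j * tau n (vec_of_poly n (monom 1 j * hstar)) i)"
      by (rule ext, rule sum.cong) (auto simp: r_eq)
    also have "\<dots> = tau n (\<lambda>i. \<Sum>j<k. cc j * vec_of_poly n (monom 1 j * hstar) i)"
      by (rule tau_lin)
    also have "\<dots> = tau n (vec_of_poly n ((\<Sum>j<k. monom (cc j) j) * hstar))"
      by (simp only: vec_lin)
    finally show ?thesis .
  qed
  have Cvan: "\<forall>i\<ge>k. coeff (\<Sum>j<k. monom (cc j) j) i = 0" for cc :: "nat \<Rightarrow> 'a"
    by (auto simp: coeff_sum coeff_monom)
  have Ccoeff: "coeff (\<Sum>j<k. monom (cc j) j) i = (if i < k then cc i else 0)" for cc :: "nat \<Rightarrow> 'a" and i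
    by (auto simp: coeff_sum coeff_monom)
  have vec_zero: "P = 0" if "vec_of_poly n P = (\<lambda>i. 0)" "\<forall>i\<ge>N. coeff P i = 0" for P :: "'a poly"
  proof (rule poly_eqI)
    fix i show "coeff P i = coeff 0 i"
    proof (cases "i < N")
      case True
      have "vec_of_poly n P i = 0" using that(1) by simp
      then show ?thesis using True by (simp add: vec_of_poly_def N_def)
    qed (use that(2) in auto)
  qed

  have indep: "\<forall>cc. (\<lambda>i. \<Sum>j<k. cc j * r j i) = (\<lambda>i. 0) \<longrightarrow> (\<forall>j<k. cc j = 0)"
  proof (intro allI impI)
    fix cc :: "nat \<Rightarrow> 'a" and j
    assume z: "(\<lambda>i. \<Sum>j<k. cc j * r j i) = (\<lambda>i. 0)" and j: "j < k"
    let ?C = "\<Sum>j<k. monom (cc j) j"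
    have "vec_of_poly n (?C * hstar) = (\<lambda>i. 0)"
      using tau_inj0[OF vec_in_vecs] z comb by metis
    moreover have "\<forall>i\<ge>N. coeff (?C * hstar) i = 0"
      using coeff_mult_vanish[OF Cvan hs_van] kN by auto
    ultimately have "?C * hstar = 0" by (rule vec_zero)
    then have "?C = 0" using hs0 by simp
    then have "coeff ?C j = 0" by simp
    then show "cc j = 0" using j Ccoeff by simp
  qed

  have span: "symp_dual n ?D = {(\<lambda>i. \<Sum>j<k. cc j * r j i) | cc. True}"
  proof (rule set_eqI, rule iffI)
    fix v assume "v \<in> symp_dual n ?D"
    then have v: "v \<in> vecs n" and orth: "\<forall>u\<in>?D. symp n u v = 0" unfolding symp_dual_def by auto
    obtain w where w: "w \<in> vecs n" and vw: "v = tau n w" using tau_surj[OF v] by blast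
    have "\<forall>u\<in>?D. dot u w = 0" using orth unfolding vw symp_tau dot_def N_def by simp
    then obtain C where C: "\<forall>i\<ge>k. coeff C i = 0" and wC: "w = vec_of_poly n (C * hstar)"
      using B[OF w] by blast
    have "C = (\<Sum>j<k. monom (coeff C j) j)" by (rule poly_as_monoms[OF C])
    then have "v = (\<lambda>i. \<Sum>j<k. coeff C j * r j i)" unfolding comb vw wC by simp
    then show "v \<in> {(\<lambda>i. \<Sum>j<k. cc j * r j i) | cc. True}" by blast
  next
    fix v assume "v \<in> {(\<lambda>i. \<Sum>j<k. cc j * r j i) | cc. True}"
    then obtain cc where "v = (\<lambda>i. \<Sum>j<k. cc j * r j i)" by blast
    then have v: "v = tau n (vec_of_poly n ((\<Sum>j<k. monom (cc j) j) * hstar))" using comb by simp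
    have "symp n u v = 0" if "u \<in> ?D" for u
      unfolding v symp_tau using A[OF Cvan that] unfolding dot_def N_def by simp
    then show "v \<in> symp_dual n ?D" unfolding symp_dual_def using v tau_vecs by auto
  qed
  show ?thesis unfolding is_generator_matrix_def using indep span unfolding r_def by simp
qed

end
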